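(* Let $f(a,b,c,d,e,x,y)$ be analytic in a neighbourhood of the origin of $\mathbb{C}^7$. Suppose that, with $F(X,Y)=f(a,b,c,d,e,X,Y)$, $f$ satisfies in a neighbourhood of the origin the equation $$x\Big\{F(xq,y)-F(xq,yq)-(d+e)q^{-1}\big[F(xq,yq)-F(xq,yq^2)\big]+de\,q^{-2}\big[F(xq,yq^2)-F(xq,yq^3)\big]\Big\}$$ $$=y\Big\{\big[F(xq,yq)-F(x,yq)\big]-(a+b+c)\big[F(xq,yq^2)-F(x,yq^2)\big]+(ab+ac+bc)\big[F(xq,yq^3)-F(x,yq^3)\big]-abc\big[F(xq,yq^4)-F(x,yq^4)\big]\Big\}.$$ Then $$f(a,b,c,d,e,x,y)=\mathbb{E}(a,b,c,d,e,y\theta_x)\{f(a,b,c,d,e,x,0)\}.$$ Precisely: writing $f=\sum_{k\ge0}A_k(x)y^k$ (with $a,b,c,d,e$ fixed), one has for each $k\ge0$, as power series in $x$, $$A_k(x)=\frac{(-1)^kq^{\binom k2}(a,b,c;q)_k}{(q,d,e;q)_k}\,\theta_x^k\{f(a,b,c,d,e,x,0)\}.$$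
   Context: Throughout, $0<q<1$. $(\alpha;q)_0=1$, $(\alpha;q)_n=\prod_{j=0}^{n-1}(1-\alpha q^j)$, and $(\alpha_1,\dots,\alpha_r;q)_n=\prod_i(\alpha_i;q)_n$. $\theta_x$ is the $q$-difference operator $\theta_x\{g(x)\}=\frac{g(xq^{-1})-g(x)}{q^{-1}x}$. On power series it acts termwise by $\theta_x\{x^m\}=q^{1-m}(1-q^m)x^{m-1}$. The operator is $\mathbb{E}(a,b,c,d,e,y\theta_x)=\sum_{n\ge0}\frac{(-1)^nq^{\binom n2}(a,b,c;q)_n}{(q,d,e;q)_n}(y\theta_x)^n$. *)

theory Defs
  imports "HOL-Analysis.Analysis" "HOL-Computational_Algebra.Formal_Power_Series"
begin

definition qpoch :: "complex \<Rightarrow> complex \<Rightarrow> nat \<Rightarrow> complex" where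
  "qpoch \<alpha> q n = (\<Prod>j<n. 1 - \<alpha> * q ^ j)"

text \<open>The q-difference operator theta_x acting termwise on formal power series in x:
  theta_x x^m = q^(1-m) (1-q^m) x^(m-1), so the coefficient of x^n in theta g is
  q^(-n) (1 - q^(n+1)) times the coefficient of x^(n+1) in g.\<close>
definition qtheta :: "complex \<Rightarrow> complex fps \<Rightarrow> complex fps" where
  "qtheta q g = Abs_fps (\<lambda>n. (inverse q) ^ n * (1 - q ^ (Suc n)) * fps_nth g (Suc n))"

text \<open>Coefficient of the n-th term of the operator E(a,b,c,d,e, y theta_x).\<close>
definition Ecoeff :: "complex \<Rightarrow> complex \<Rightarrow> complex \<Rightarrow> complex \<Rightarrow> complex \<Rightarrow> complex \<Rightarrow> nat \<Rightarrow> complex" where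
  "Ecoeff q a b c d e n =
     (-1) ^ n * q ^ (n choose 2) * (qpoch a q n * qpoch b q n * qpoch c q n)
       / (qpoch q q n * qpoch d q n * qpoch e q n)"

definition analytic_polydisc7 ::
  "(complex \<Rightarrow> complex \<Rightarrow> complex \<Rightarrow> complex \<Rightarrow> complex \<Rightarrow> complex \<Rightarrow> complex \<Rightarrow> complex)
    \<Rightarrow> real \<Rightarrow> bool" where
  "analytic_polydisc7 f r \<longleftrightarrow>
    (\<exists>co :: nat \<Rightarrow> nat \<Rightarrow> nat \<Rightarrow> nat \<Rightarrow> nat \<Rightarrow> nat \<Rightarrow> nat \<Rightarrow> complex.
      \<forall>z1 z2 z3 z4 z5 z6 z7.
        norm z1 < r \<and> norm z2 < r \<and> norm z3 < r \<and> norm z4 < r \<and> norm z5 < r \<and>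
        norm z6 < r \<and> norm z7 < r \<longrightarrow>
        ((\<lambda>(i1, i2, i3, i4, i5, i6, i7). co i1 i2 i3 i4 i5 i6 i7 *
            z1 ^ i1 * z2 ^ i2 * z3 ^ i3 * z4 ^ i4 * z5 ^ i5 * z6 ^ i6 * z7 ^ i7)
          has_sum f z1 z2 z3 z4 z5 z6 z7) UNIV)"

end

theory Submission
  imports Defs
begin


lemma has_sum_diff':
  fixes f g :: "'a \<Rightarrow> complex"
  assumes "(f has_sum a) A" "(g has_sum b) A"
  shows "((\<lambda>x. f x - g x) has_sum (a - b)) A"
proof -
  have "((\<lambda>x. - g x) has_sum - b) A" using assms(2) by (simp add: has_sum_uminus)
  from has_sum_add[OF assms(1) this] show ?thesis by simp
qed

lemma powser_unique0:
  fixes a :: "nat \<Rightarrow> complex"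
  assumes s: "0 < s" and h: "\<And>x. norm x < s \<Longrightarrow> ((\<lambda>n. a n * x^n) has_sum 0) UNIV"
  shows "a n = 0"
proof (induction n rule: less_induct)
  case (less n)
  have "((\<lambda>x::complex. 0) \<longlongrightarrow> a (0 + n)) (at 0)"
  proof (rule powser_limit_0_strong[OF s, where a="\<lambda>i. a (i + n)" and f="\<lambda>_. 0"])
    fix x :: complex assume x: "x \<noteq> 0" "norm x < s"
    have "(\<lambda>i. a i * x^i) sums 0" using h[OF x(2)] by (rule has_sum_imp_sums)
    moreover have "(\<Sum>i<n. a i * x^i) = 0" using less by simp
    ultimately have "(\<lambda>i. a (i+n) * x^(i+n)) sums 0"
      using sums_iff_shift[of "\<lambda>i. a i * x^i" n 0] by simp
    then have "(\<lambda>i. a (i+n) * x^(i+n) / x^n) sums (0 / x^n)" by (rule sums_divide)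
    moreover have "(\<lambda>i. a (i+n) * x^(i+n) / x^n) = (\<lambda>i. a (i+n) * x^i)"
      using x(1) by (auto simp: power_add)
    ultimately show "(\<lambda>i. a (i+n) * x^i) sums 0" by simp
  qed
  then show ?case
    by (metis LIM_const_eq add_0)
qed

lemma powser2_unique0:
  fixes D :: "nat \<Rightarrow> nat \<Rightarrow> complex"
  assumes s: "0 < s"
    and h: "\<And>x y. norm x < s \<Longrightarrow> norm y < s \<Longrightarrow> ((\<lambda>(m,k). D m k * x^m * y^k) has_sum 0) UNIV"
  shows "D m k = 0"
proof -
  have bz: "infsum (\<lambda>k. D m k * y^k) UNIV = 0" if y: "norm y < s" for y m
  proof -
    define x0 :: complex where "x0 = of_real (s/2)"
    have x0: "norm x0 < s" "x0 \<noteq> 0" using s by (auto simp: x0_def)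
    have sm: "(\<lambda>k. D m k * y^k) summable_on UNIV" for m
    proof -
      have "(\<lambda>(m,k). D m k * x0^m * y^k) summable_on Sigma UNIV (\<lambda>_. UNIV)"
        using h[OF x0(1) y] by (auto simp: summable_on_def)
      from summable_on_SigmaD1[OF this, of m]
      have "(\<lambda>k. x0^m * (D m k * y^k)) summable_on UNIV" by (simp add: mult_ac)
      then show ?thesis using summable_on_cmult_right'[of "x0^m" "\<lambda>k. D m k * y^k" UNIV] x0(2) by simp
    qed
    define b where "b m = infsum (\<lambda>k. D m k * y^k) UNIV" for m
    have "((\<lambda>m. b m * x^m) has_sum 0) UNIV" if x: "norm x < s" for x
    proof (rule has_sum_SigmaD[where B="\<lambda>_. UNIV"])
      show "((\<lambda>(m,k). D m k * x^m * y^k) has_sum 0) (Sigma UNIV (\<lambda>_. UNIV))"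
        using h[OF x y] by simp
      fix m :: nat
      have "((\<lambda>k. x^m * (D m k * y^k)) has_sum (x^m * b m)) UNIV"
        unfolding b_def by (rule has_sum_cmult_right) (use sm in simp)
      then show "((\<lambda>k. (\<lambda>(m,k). D m k * x^m * y^k) (m,k)) has_sum (b m * x^m)) UNIV"
        by (simp add: mult_ac)
    qed
    then have "b m = 0" by (rule powser_unique0[OF s])
    then show ?thesis by (simp add: b_def)
  qed
  have "((\<lambda>k. D m k * y^k) has_sum 0) UNIV" if y: "norm y < s" for y
  proof -
    have sm: "(\<lambda>k. D m k * y^k) summable_on UNIV"
    proof -
      define x0 :: complex where "x0 = of_real (s/2)"
      have x0: "norm x0 < s" "x0 \<noteq> 0" using s by (auto simp: x0_def)
      have "(\<lambda>(m,k). D m k * x0^m * y^k) summable_on Sigma UNIV (\<lambda>_. UNIV)"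
        using h[OF x0(1) y] by (auto simp: summable_on_def)
      from summable_on_SigmaD1[OF this, of m]
      have "(\<lambda>k. x0^m * (D m k * y^k)) summable_on UNIV" by (simp add: mult_ac)
      then show ?thesis using summable_on_cmult_right'[of "x0^m" "\<lambda>k. D m k * y^k" UNIV] x0(2) by simp
    qed
    show ?thesis using has_sum_infsum[OF sm] bz[OF y] by simp
  qed
  then show ?thesis by (rule powser_unique0[OF s])
qed

lemma shift_x:
  fixes c :: "nat \<Rightarrow> nat \<Rightarrow> complex"
  assumes "((\<lambda>(m,k). c m k * x^m * y^k) has_sum S) UNIV"
  shows "((\<lambda>(m,k). (if m = 0 then 0 else c (m-1) k) * x^m * y^k) has_sum (x*S)) UNIV"
proof -
  define g where "g = (\<lambda>(m,k). (if m = 0 then 0 else c (m-1) k) * x^m * y^k)"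
  define h where "h = (\<lambda>(m::nat,k::nat). (Suc m, k))"
  have inj: "inj_on h UNIV" by (auto simp: h_def inj_on_def)
  have "((\<lambda>p. x * (\<lambda>(m,k). c m k * x^m * y^k) p) has_sum (x*S)) UNIV"
    by (rule has_sum_cmult_right[OF assms])
  moreover have "(\<lambda>p. x * (\<lambda>(m,k). c m k * x^m * y^k) p) = g \<circ> h"
    by (auto simp: g_def h_def fun_eq_iff mult_ac)
  ultimately have "(g has_sum (x*S)) (h ` UNIV)" using has_sum_reindex[OF inj, of g] by simp
  moreover have "p \<notin> h ` UNIV \<Longrightarrow> g p = 0" for p
  proof (cases p)
    case (Pair m k)
    assume "p \<notin> h ` UNIV"
    then have "m = 0" using Pair by (cases m) (auto simp: h_def image_def)
    then show ?thesis using Pair by (simp add: g_def)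
  qed
  ultimately have "(g has_sum (x*S)) UNIV"
    using has_sum_cong_neutral[of UNIV "range h" g g "x*S"] by blast
  then show ?thesis unfolding g_def .
qed

lemma shift_y:
  fixes c :: "nat \<Rightarrow> nat \<Rightarrow> complex"
  assumes "((\<lambda>(m,k). c m k * x^m * y^k) has_sum S) UNIV"
  shows "((\<lambda>(m,k). (if k = 0 then 0 else c m (k-1)) * x^m * y^k) has_sum (y*S)) UNIV"
proof -
  define g where "g = (\<lambda>(m,k). (if k = 0 then 0 else c m (k-1)) * x^m * y^k)"
  define h where "h = (\<lambda>(m::nat,k::nat). (m, Suc k))"
  have inj: "inj_on h UNIV" by (auto simp: h_def inj_on_def)
  have "((\<lambda>p. y * (\<lambda>(m,k). c m k * x^m * y^k) p) has_sum (y*S)) UNIV"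
    by (rule has_sum_cmult_right[OF assms])
  moreover have "(\<lambda>p. y * (\<lambda>(m,k). c m k * x^m * y^k) p) = g \<circ> h"
    by (auto simp: g_def h_def fun_eq_iff mult_ac)
  ultimately have "(g has_sum (y*S)) (h ` UNIV)" using has_sum_reindex[OF inj, of g] by simp
  moreover have "p \<notin> h ` UNIV \<Longrightarrow> g p = 0" for p
  proof (cases p)
    case (Pair m k)
    assume "p \<notin> h ` UNIV"
    then have "k = 0" using Pair by (cases k) (auto simp: h_def image_def)
    then show ?thesis using Pair by (simp add: g_def)
  qed
  ultimately have "(g has_sum (y*S)) UNIV"
    using has_sum_cong_neutral[of UNIV "range h" g g "y*S"] by blast
  then show ?thesis unfolding g_def .
qed

lemma scale_xy:
  fixes c :: "nat \<Rightarrow> nat \<Rightarrow> complex"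
  assumes "((\<lambda>(m,k). c m k * (x*u)^m * (y*w)^k) has_sum S) UNIV"
  shows "((\<lambda>(m,k). (c m k * u^m * w^k) * x^m * y^k) has_sum S) UNIV"
  using assms by (subst has_sum_cong[where g="\<lambda>(m,k). c m k * (x*u)^m * (y*w)^k"])
    (auto simp: power_mult_distrib mult_ac)

lemma qpoch_Suc: "qpoch a q (Suc n) = qpoch a q n * (1 - a * q^n)"
  by (simp add: qpoch_def)

lemma Ecoeff_Suc:
  assumes "qpoch q q (Suc k) \<noteq> 0" "qpoch d q (Suc k) \<noteq> 0" "qpoch e q (Suc k) \<noteq> 0"
  shows "Ecoeff q a b c d e (Suc k) = Ecoeff q a b c d e k *
     (- (q^k) * (1 - a*q^k) * (1 - b*q^k) * (1 - c*q^k)) /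
     ((1 - q*q^k) * (1 - d*q^k) * (1 - e*q^k))"
proof -
  have ch: "Suc k choose 2 = (k choose 2) + k"
    by (simp add: numeral_2_eq_2)
  show ?thesis using assms unfolding Ecoeff_def qpoch_Suc ch
    by (simp add: power_add field_simps)
qed

lemma hs_lin4:
  fixes c0 c1 c2 c3 :: "nat \<Rightarrow> nat \<Rightarrow> complex"
  assumes h0: "((\<lambda>(m,k). c0 m k * x^m * y^k) has_sum S0) UNIV"
      and h1: "((\<lambda>(m,k). c1 m k * x^m * y^k) has_sum S1) UNIV"
      and h2: "((\<lambda>(m,k). c2 m k * x^m * y^k) has_sum S2) UNIV"
      and h3: "((\<lambda>(m,k). c3 m k * x^m * y^k) has_sum S3) UNIV"
  shows "((\<lambda>(m,k). (\<alpha>0 * c0 m k + \<alpha>1 * c1 m k + \<alpha>2 * c2 m k + \<alpha>3 * c3 m k) * x^m * y^k)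
           has_sum (\<alpha>0 * S0 + \<alpha>1 * S1 + \<alpha>2 * S2 + \<alpha>3 * S3)) UNIV"
proof -
  have "((\<lambda>p. \<alpha>0 * (\<lambda>(m,k). c0 m k * x^m * y^k) p + \<alpha>1 * (\<lambda>(m,k). c1 m k * x^m * y^k) p
          + \<alpha>2 * (\<lambda>(m,k). c2 m k * x^m * y^k) p + \<alpha>3 * (\<lambda>(m,k). c3 m k * x^m * y^k) p)
     has_sum (\<alpha>0 * S0 + \<alpha>1 * S1 + \<alpha>2 * S2 + \<alpha>3 * S3)) UNIV"
    by (intro has_sum_add has_sum_cmult_right h0 h1 h2 h3)
  then show ?thesis
    by (rule has_sum_cong[THEN iffD1, rotated]) (auto simp: algebra_simps)
qed

lemma hs_coef:
  fixes c c' :: "nat \<Rightarrow> nat \<Rightarrow> complex"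
  assumes "((\<lambda>(m,k). c m k * x^m * y^k) has_sum S) UNIV" "\<And>m k. c m k = c' m k" "S = S'"
  shows "((\<lambda>(m,k). c' m k * x^m * y^k) has_sum S') UNIV"
  using assms by simp

lemma qpoch_qq_nz:
  fixes q :: real assumes "0 < q" "q < 1"
  shows "qpoch (complex_of_real q) (complex_of_real q) n \<noteq> 0"
proof -
  have "1 - complex_of_real q * complex_of_real q ^ j \<noteq> 0" for j
  proof
    assume "1 - complex_of_real q * complex_of_real q ^ j = 0"
    then have "complex_of_real (q^(Suc j)) = 1" by simp
    then have "q^(Suc j) = 1" using of_real_eq_1_iff by blast
    moreover have "q^(Suc j) < 1" using assms by (metis less_eq_real_def power_Suc_less_one)
    ultimately show False by simp
  qed
  then show ?thesis unfolding qpoch_def by (simp add: prod_zero_iff)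
qed

lemma hs_diff:
  fixes c1 c2 :: "nat \<Rightarrow> nat \<Rightarrow> complex"
  assumes "((\<lambda>(m,k). c1 m k * x^m * y^k) has_sum S1) UNIV"
      and "((\<lambda>(m,k). c2 m k * x^m * y^k) has_sum S2) UNIV"
  shows "((\<lambda>(m,k). (c1 m k - c2 m k) * x^m * y^k) has_sum (S1 - S2)) UNIV"
  using has_sum_diff'[OF assms]
  by (rule has_sum_cong[THEN iffD1, rotated]) (auto simp: algebra_simps)

lemma alg_step:
  fixes X A Dn Ej T B Nr :: complex
  assumes "X * A^n * Dn = Ej * T * (B - 1) * Nr" "A \<noteq> 0" "Dn \<noteq> 0"
  shows "X = Ej * (- Nr) / Dn * (inverse A ^ n * (1 - B) * T)"
proof -
  have An: "A^n \<noteq> 0" using assms(2) by simp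
  have "X = Ej * T * (B - 1) * Nr / (A^n * Dn)"
    using assms(1) An assms(3) by (simp add: eq_divide_eq mult.assoc)
  then show ?thesis using An assms(3) by (simp add: field_simps power_inverse)
qed

lemma Pf:
  fixes Q Z d e :: complex assumes "Q \<noteq> 0"
  shows "1 + (- 1 - (d+e) * inverse Q) * (Q*Z) + ((d+e) * inverse Q + d*e*inverse Q ^ 2) * (Q*Z)^2
     + (- (d*e*inverse Q ^ 2)) * (Q*Z)^3 = (1 - Q*Z)*(1-d*Z)*(1-e*Z)"
  using assms by (simp add: field_simps power2_eq_square power3_eq_cube)

lemma Rf:
  fixes Z a b c :: complex
  shows "1 * Z + (- (a+b+c)) * Z^2 + (a*b + a*c + b*c) * Z^3 + (- (a*b*c)) * Z^4 = Z * (1-a*Z)*(1-b*Z)*(1-c*Z)"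
  by (simp add: algebra_simps power2_eq_square power3_eq_cube power4_eq_xxxx)



theorem theorem2:
  fixes f :: "complex \<Rightarrow> complex \<Rightarrow> complex \<Rightarrow> complex \<Rightarrow> complex \<Rightarrow> complex \<Rightarrow> complex \<Rightarrow> complex"
    and q r \<delta> :: real
  assumes q0: "0 < q" and q1: "q < 1"
    and r0: "r > 0" and ana: "analytic_polydisc7 f r"
    and \<delta>0: "\<delta> > 0"
    and eqn: "\<forall>a b c d e x y.
      norm a < \<delta> \<and> norm b < \<delta> \<and> norm c < \<delta> \<and> norm d < \<delta> \<and> norm e < \<delta> \<and>
      norm x < \<delta> \<and> norm y < \<delta> \<longrightarrow>
      (let Q = complex_of_real q; F = f a b c d e in
        x * ( F (x*Q) y - F (x*Q) (y*Q)
              - (d + e) * inverse Q * (F (x*Q) (y*Q) - F (x*Q) (y*Q^2))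
              + d * e * inverse Q ^ 2 * (F (x*Q) (y*Q^2) - F (x*Q) (y*Q^3)) )
        = y * ( (F (x*Q) (y*Q) - F x (y*Q))
              - (a + b + c) * (F (x*Q) (y*Q^2) - F x (y*Q^2))
              + (a*b + a*c + b*c) * (F (x*Q) (y*Q^3) - F x (y*Q^3))
              - a * b * c * (F (x*Q) (y*Q^4) - F x (y*Q^4)) ))"
  shows "\<forall>a b c d e.
      norm a < min r \<delta> \<and> norm b < min r \<delta> \<and> norm c < min r \<delta> \<and>
      norm d < min r \<delta> \<and> norm e < min r \<delta> \<and>
      (\<forall>n. qpoch d (complex_of_real q) n \<noteq> 0 \<and> qpoch e (complex_of_real q) n \<noteq> 0) \<longrightarrow>
      (\<forall>(\<rho>::real) (C :: nat \<Rightarrow> nat \<Rightarrow> complex).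
         \<rho> > 0 \<and>
         (\<forall>x y. norm x < \<rho> \<and> norm y < \<rho> \<longrightarrow>
            ((\<lambda>(m, k). C m k * x ^ m * y ^ k) has_sum f a b c d e x y) UNIV) \<longrightarrow>
         (\<forall>k. Abs_fps (\<lambda>m. C m k) =
              fps_const (Ecoeff (complex_of_real q) a b c d e k) *
                (qtheta (complex_of_real q) ^^ k) (Abs_fps (\<lambda>m. C m 0))))"
proof (intro allI impI)
  fix a b c d e :: complex
  assume H: "norm a < min r \<delta> \<and> norm b < min r \<delta> \<and> norm c < min r \<delta> \<and>
      norm d < min r \<delta> \<and> norm e < min r \<delta> \<and>
      (\<forall>n. qpoch d (complex_of_real q) n \<noteq> 0 \<and> qpoch e (complex_of_real q) n \<noteq> 0)"
  fix \<rho> :: real and C :: "nat \<Rightarrow> nat \<Rightarrow> complex"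
  assume HC: "\<rho> > 0 \<and>
         (\<forall>x y. norm x < \<rho> \<and> norm y < \<rho> \<longrightarrow>
            ((\<lambda>(m, k). C m k * x ^ m * y ^ k) has_sum f a b c d e x y) UNIV)"
  fix k :: nat
  define Q where "Q = complex_of_real q"
  define G where "G = f a b c d e"
  have nQ: "norm Q = q" using q0 by (simp add: Q_def)
  have Q0: "Q \<noteq> 0" using q0 by (simp add: Q_def)
  define s where "s = min \<rho> \<delta>"
  have s0: "s > 0" using HC \<delta>0 by (simp add: s_def)
  have ser: "((\<lambda>(m,k). C m k * x^m * y^k) has_sum G x y) UNIV"
    if "norm x < \<rho>" "norm y < \<rho>" for x y
    using HC that by (simp add: G_def)
  have sc: "((\<lambda>(m,k). (C m k * u^m * w^k) * x^m * y^k) has_sum G (x*u) (y*w)) UNIV"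
    if "norm x < s" "norm y < s" "norm u \<le> 1" "norm w \<le> 1" for x y u w
  proof (rule scale_xy, rule ser)
    have "norm (x*u) \<le> norm x" using that by (simp add: norm_mult mult_left_le)
    then show "norm (x*u) < \<rho>" using that by (simp add: s_def)
    have "norm (y*w) \<le> norm y" using that by (simp add: norm_mult mult_left_le)
    then show "norm (y*w) < \<rho>" using that by (simp add: s_def)
  qed
  have nQj: "norm (Q^j) \<le> 1" for j using nQ q0 q1 by (simp add: norm_power power_le_one)
  define \<alpha>1 where "\<alpha>1 = - 1 - (d+e) * inverse Q"
  define \<alpha>2 where "\<alpha>2 = (d+e) * inverse Q + d*e*inverse Q ^ 2"
  define \<alpha>3 where "\<alpha>3 = - (d*e*inverse Q ^ 2)"
  define P where "P k = 1 + \<alpha>1 * (Q^1)^k + \<alpha>2 * (Q^2)^k + \<alpha>3 * (Q^3)^k" for k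
  define \<beta>2 where "\<beta>2 = - (a+b+c)"
  define \<beta>3 where "\<beta>3 = a*b + a*c + b*c"
  define \<beta>4 where "\<beta>4 = - (a*b*c)"
  define R where "R k = 1 * (Q^1)^k + \<beta>2 * (Q^2)^k + \<beta>3 * (Q^3)^k + \<beta>4 * (Q^4)^k" for k
  define CL where "CL m k = C m k * Q^m * P k" for m k
  define CR where "CR m k = C m k * (Q^m - 1) * R k" for m k
  define D where "D m k = (if m = 0 then 0 else CL (m-1) k) - (if k = 0 then 0 else CR m (k-1))" for m k
  have main: "((\<lambda>(m,k). D m k * x^m * y^k) has_sum 0) UNIV"
    if x: "norm x < s" and y: "norm y < s" for x y
  proof -
    have t: "((\<lambda>(m,k). (C m k * u^m * (Q^j)^k) * x^m * y^k) has_sum G (x*u) (y*Q^j)) UNIV"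
      if "norm u \<le> 1" for u j using sc[OF x y that nQj] .
    have L: "((\<lambda>(m,k). CL m k * x^m * y^k) has_sum
        (G (x*Q) y - G (x*Q) (y*Q)
              - (d + e) * inverse Q * (G (x*Q) (y*Q) - G (x*Q) (y*Q^2))
              + d * e * inverse Q ^ 2 * (G (x*Q) (y*Q^2) - G (x*Q) (y*Q^3)))) UNIV"
      by (rule hs_coef[OF hs_lin4[OF t[of Q 0] t[of Q 1] t[of Q 2] t[of Q 3], of 1 \<alpha>1 \<alpha>2 \<alpha>3]])
         (auto simp: CL_def P_def \<alpha>1_def \<alpha>2_def \<alpha>3_def nQ less_imp_le[OF q1] algebra_simps)
    have R1: "((\<lambda>(m,k). (C m k * Q^m * R k) * x^m * y^k) has_sum
        (G (x*Q) (y*Q) - (a+b+c) * G (x*Q) (y*Q^2) + (a*b+a*c+b*c) * G (x*Q) (y*Q^3) - a*b*c * G (x*Q) (y*Q^4))) UNIV"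
      by (rule hs_coef[OF hs_lin4[OF t[of Q 1] t[of Q 2] t[of Q 3] t[of Q 4], of 1 \<beta>2 \<beta>3 \<beta>4]])
         (auto simp: R_def \<beta>2_def \<beta>3_def \<beta>4_def nQ less_imp_le[OF q1] algebra_simps)
    have R2: "((\<lambda>(m,k). (C m k * 1^m * R k) * x^m * y^k) has_sum
        (G x (y*Q) - (a+b+c) * G x (y*Q^2) + (a*b+a*c+b*c) * G x (y*Q^3) - a*b*c * G x (y*Q^4))) UNIV"
      by (rule hs_coef[OF hs_lin4[OF t[of 1 1] t[of 1 2] t[of 1 3] t[of 1 4], of 1 \<beta>2 \<beta>3 \<beta>4]])
         (auto simp: R_def \<beta>2_def \<beta>3_def \<beta>4_def algebra_simps)
    have R: "((\<lambda>(m,k). CR m k * x^m * y^k) has_sum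
        ((G (x*Q) (y*Q) - G x (y*Q))
              - (a + b + c) * (G (x*Q) (y*Q^2) - G x (y*Q^2))
              + (a*b + a*c + b*c) * (G (x*Q) (y*Q^3) - G x (y*Q^3))
              - a * b * c * (G (x*Q) (y*Q^4) - G x (y*Q^4)))) UNIV"
      by (rule hs_coef[OF hs_diff[OF R1 R2]]) (auto simp: CR_def algebra_simps)
    have "((\<lambda>(m,k). D m k * x^m * y^k) has_sum
        (x * (G (x*Q) y - G (x*Q) (y*Q)
              - (d + e) * inverse Q * (G (x*Q) (y*Q) - G (x*Q) (y*Q^2))
              + d * e * inverse Q ^ 2 * (G (x*Q) (y*Q^2) - G (x*Q) (y*Q^3))) -
         y * ((G (x*Q) (y*Q) - G x (y*Q))
              - (a + b + c) * (G (x*Q) (y*Q^2) - G x (y*Q^2))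
              + (a*b + a*c + b*c) * (G (x*Q) (y*Q^3) - G x (y*Q^3))
              - a * b * c * (G (x*Q) (y*Q^4) - G x (y*Q^4))))) UNIV"
      by (rule hs_coef[OF hs_diff[OF shift_x[OF L] shift_y[OF R]]]) (auto simp: D_def)
    moreover have "norm a < \<delta>" "norm b < \<delta>" "norm c < \<delta>" "norm d < \<delta>" "norm e < \<delta>"
      "norm x < \<delta>" "norm y < \<delta>" using H x y by (auto simp: s_def)
    ultimately show ?thesis using eqn unfolding Q_def G_def Let_def by simp
  qed
  have D0: "D m k = 0" for m k by (rule powser2_unique0[OF s0 main])
  have rec: "C m (Suc k) * Q^m * P (Suc k) = C (Suc m) k * (Q^Suc m - 1) * R k" for m k
    using D0[of "Suc m" "Suc k"] by (simp add: D_def CL_def CR_def)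
  show "Abs_fps (\<lambda>m. C m k) =
              fps_const (Ecoeff (complex_of_real q) a b c d e k) *
                (qtheta (complex_of_real q) ^^ k) (Abs_fps (\<lambda>m. C m 0))"
  proof -
    have nzq: "1 - Q*Q^j \<noteq> 0" for j
      using qpoch_qq_nz[OF q0 q1, of "Suc j"] by (simp add: qpoch_Suc Q_def)
    have nzd: "1 - d*Q^j \<noteq> 0" for j
    proof -
      have "qpoch d Q (Suc j) \<noteq> 0" using H unfolding Q_def by blast
      then show ?thesis unfolding qpoch_Suc by simp
    qed
    have nze: "1 - e*Q^j \<noteq> 0" for j
    proof -
      have "qpoch e Q (Suc j) \<noteq> 0" using H unfolding Q_def by blast
      then show ?thesis unfolding qpoch_Suc by simp
    qed
    have pw: "(Q^i)^j = (Q^j)^i" for i j by (simp add: power_mult[symmetric] mult.commute)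
    have pw': "(Q^i)^(Suc j) = (Q*Q^j)^i" for i j
    proof -
      have "(Q^i)^(Suc j) = Q^(i * Suc j)" by (simp only: power_mult)
      also have "\<dots> = (Q^(Suc j))^i" by (simp only: power_mult[symmetric] mult.commute)
      finally show ?thesis by simp
    qed
    have Pfac: "P (Suc j) = (1 - Q*Q^j)*(1-d*Q^j)*(1-e*Q^j)" for j
      unfolding P_def pw' power_one_right power_Suc[of Q j] \<alpha>1_def \<alpha>2_def \<alpha>3_def by (rule Pf[OF Q0])
    have Rfac: "R j = Q^j * (1-a*Q^j)*(1-b*Q^j)*(1-c*Q^j)" for j
      unfolding R_def pw[of 2 j] pw[of 3 j] pw[of 4 j] power_one_right \<beta>2_def \<beta>3_def \<beta>4_def by (rule Rf)
    define g where "g = Abs_fps (\<lambda>m. C m 0)"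
    define E where "E = Ecoeff Q a b c d e"
    have ind: "\<forall>m. C m j = E j * fps_nth ((qtheta Q ^^ j) g) (m)" for j
    proof (induction j)
      case 0
      then show ?case by (simp add: E_def Ecoeff_def qpoch_def g_def binomial_eq_0)
    next
      case (Suc j)
      show ?case
      proof
        fix m
        define T where "T = fps_nth ((qtheta Q ^^ j) g) (Suc m)"
        have IH: "C (Suc m) j = E j * T" using Suc T_def by simp
        have th: "fps_nth ((qtheta Q ^^ Suc j) g) (m) = inverse Q ^ m * (1 - Q ^ Suc m) * T"
          by (simp add: qtheta_def T_def)
        have ES0: "E (Suc j) = E j * (- (Q^j) * (1 - a*Q^j) * (1 - b*Q^j) * (1 - c*Q^j)) /
             ((1 - Q*Q^j) * (1 - d*Q^j) * (1 - e*Q^j))"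
          unfolding E_def
          by (rule Ecoeff_Suc) (use qpoch_qq_nz[OF q0 q1] H in \<open>auto simp: Q_def\<close>)
        have ES: "E (Suc j) = E j * (- (Q^j * (1 - a*Q^j) * (1 - b*Q^j) * (1 - c*Q^j))) /
             ((1 - Q*Q^j) * (1 - d*Q^j) * (1 - e*Q^j))"
          unfolding ES0 by simp
        have r: "C m (Suc j) * Q^m * ((1 - Q*Q^j)*(1-d*Q^j)*(1-e*Q^j)) =
                 E j * T * (Q^Suc m - 1) * (Q^j * (1-a*Q^j)*(1-b*Q^j)*(1-c*Q^j))"
          using rec[of m j] unfolding Pfac Rfac IH .
        show "C m (Suc j) = E (Suc j) * fps_nth ((qtheta Q ^^ Suc j) g) (m)"
          unfolding th ES using Q0 nzq[of j] nzd[of j] nze[of j]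
          by (intro alg_step[OF r]) auto
      qed
    qed
    show ?thesis
      unfolding Q_def[symmetric] g_def[symmetric] E_def[symmetric]
      by (rule fps_ext) (simp add: ind[rule_format])
  qed
qed

end
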